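(* Let $\ell_1,\dots,\ell_T\in\mathbb{R}^{n+1}$ be the observed loss vectors (with $\ell_t\in\partial\varphi_t(w_t)$ for proper losses $\varphi_t$ on $\mathbb{R}^{n+1}$ with $\Delta^n\subseteq\operatorname{dom}\partial\varphi_t$), $\widehat{\ell}_t\in\mathbb{R}^{n+1}$ arbitrary predictions, $a\in\Delta^n$, and $\mathrm{Regret}(u,\dots,u)=\sum_{t=1}^T\varphi_t(w_t)-\sum_{t=1}^T\varphi_t(u)$. For $u\in\Delta^n$: (i) If $\eta_1\geqslant\dots\geqslant\eta_{T+1}>0$ and the learner plays $\widetilde{w}_t=\mathscr{N}\big(a\circ e^{-\eta_t\sum_{i=1}^{t-1}\ell_i}\big)$, $w_t=\mathscr{N}\big(\widetilde{w}_t\circ e^{-\eta_t\widehat{\ell}_t}\big)$, then \[\mathrm{Regret}(u,\dots,u)\leqslant\frac{1}{\eta_{T+1}}\Big\langle u,\ln\frac ua\Big\rangle+\sum_{t=1}^T\frac{1}{\eta_t}Q_2^\star\big(\eta_t\lVert\ell_t-\widehat{\ell}_t\rVert_\infty\big)-\sum_{t=1}^T\frac1{\eta_t}\Big\langle w_t,\ln\frac{w_t}{\widetilde{w}_t}\Big\rangle,\] and also \[\mathrm{Regret}(u,\dots,u)\leqslant\frac{1}{\eta_{T+1}}\Big\langle u,\ln\frac ua\Big\rangle+\sum_{t=1}^T\frac{1}{\eta_t}\Phi_{\eta_t}\big(\ell_t,\widehat{\ell}_t\big)-\sum_{t=1}^T\frac1{\eta_t}\Big\langle v_t,\ln\frac{v_t}{\widetilde{w}_t}\Big\rangle,\quad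 v_t=\mathscr{N}\big(\widetilde{w}_t\circ e^{-\eta_t\widehat{\ell}'_t}\big).\] (ii) If $0<\theta_1\leqslant\dots\leqslant\theta_T$ and the learner plays $\widetilde{w}_1=a$, $\widetilde{w}_t=\mathscr{N}\big(\widetilde{w}_{t-1}\circ e^{-\theta_{t-1}\ell_{t-1}}\big)$, $w_t=\mathscr{N}\big(\widetilde{w}_t\circ e^{-\theta_t\widehat{\ell}_t}\big)$, then \[\mathrm{Regret}(u,\dots,u)\leqslant\frac{1}{\theta_1}\Big\langle u,\ln\frac ua\Big\rangle+\sum_{t=1}^T\frac{1}{\theta_t}Q_2^\star\big(\theta_t\lVert\ell_t-\widehat{\ell}_t\rVert_\infty\big)-\sum_{t=1}^T\frac1{\theta_t}\Big\langle w_t,\ln\frac{w_t}{\widetilde{w}_t}\Big\rangle,\] and also \[\mathrm{Regret}(u,\dots,u)\leqslant\frac{1}{\theta_1}\Big\langle u,\ln\frac ua\Big\rangle+\sum_{t=1}^T\frac{1}{\theta_t}\Phi_{\theta_t}\big(\ell_t,\widehat{\ell}_t\big)-\sum_{t=1}^T\frac1{\theta_t}\Big\langle v_t,\ln\frac{v_t}{\widetilde{w}_t}\Big\rangle,\quad v_t=\mathscr{N}\big(\widetilde{w}_t\circ e^{-\theta_t\widehat{\ell}'_t}\big).\]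
   Context: $\Delta^n=\{w\in\mathbb{R}^{n+1}:w\geqslant0,\sum_iw_i=1\}$; $\circ$ is the entrywise product, exponentials/logarithms/ratios are entrywise; $\mathscr{N}(v)=v/\sum_iv_i$; $\langle u,\ln\frac ua\rangle=\sum_iu_i\ln\frac{u_i}{a_i}$ with $0\ln(0/\cdot)=0$ (and $+\infty$ if $u_i>0=a_i$). $Q_\rho^\star(\varkappa)=\frac12\varkappa^2-\frac12(\lvert\varkappa\rvert-\rho)_+^2$ with $x_+=\max\{x,0\}$. $\widehat{\ell}'_t=\lambda\widehat{\ell}_t+(1-\lambda)\ell_t$ with $\lambda=\min\{\lVert\ell_t\rVert_\infty/\lVert\ell_t-\widehat{\ell}_t\rVert_\infty,1\}$ (any $\lambda$ if $\ell_t=\widehat{\ell}_t$). For $\xi>0$ and $\rho=2$, $\Phi_\xi(x^*,\widehat{x}^* )=Q_\rho^\star\big(\xi\min\{\lVert x^*-\widehat{x}^*\rVert_\infty,\lVert x^*\rVert_\infty\}\big)+\xi\lVert x^*\rVert_\infty\min\{\xi(\lVert x^*-\widehat{x}^*\rVert_\infty-\lVert x^*\rVert_\infty)_+,\rho\}$. Subdifferential of a proper function: usual convex-analysis subdifferential. *)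

theory Defs
  imports "HOL-Analysis.Analysis"
begin

text \<open>Probability prob_simplex in R^(n+1), modelled as real^'n (CARD('n) = n+1).\<close>
definition prob_simplex :: "(real^'n) set" where
  "prob_simplex = {w. (\<forall>i. 0 \<le> w$i) \<and> (\<Sum>i\<in>UNIV. w$i) = 1}"

definition had :: "real^'n \<Rightarrow> real^'n \<Rightarrow> real^'n" where
  "had x y = (\<chi> i. x$i * y$i)"

definition vexp :: "real^'n \<Rightarrow> real^'n" where
  "vexp v = (\<chi> i. exp (v$i))"

definition vnorm :: "real^'n \<Rightarrow> real^'n" where
  "vnorm v = (1 / (\<Sum>i\<in>UNIV. v$i)) *\<^sub>R v"

definition kl :: "real^'n \<Rightarrow> real^'n \<Rightarrow> ereal" where
  "kl u a = (if \<exists>i. u$i > 0 \<and> a$i = 0 then \<infinity>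
             else ereal (\<Sum>i\<in>UNIV. if u$i = 0 then 0 else u$i * ln (u$i / a$i)))"

definition Qstar :: "real \<Rightarrow> real \<Rightarrow> real" where
  "Qstar \<rho> k = k\<^sup>2 / 2 - (max (\<bar>k\<bar> - \<rho>) 0)\<^sup>2 / 2"

definition Phi :: "real \<Rightarrow> real^'n \<Rightarrow> real^'n \<Rightarrow> real" where
  "Phi \<xi> x xh = Qstar 2 (\<xi> * min (infnorm (x - xh)) (infnorm x))
      + \<xi> * infnorm x * min (\<xi> * max (infnorm (x - xh) - infnorm x) 0) 2"

text \<open>hat-ell' = lambda hat-ell + (1 - lambda) ell, lambda = min(|ell|_inf / |ell - hat-ell|_inf, 1).
  When ell = hat-ell the result is ell for any lambda (here x/0 = 0 gives lambda = 0).\<close>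
definition hatprime :: "real^'n \<Rightarrow> real^'n \<Rightarrow> real^'n" where
  "hatprime l lh = (let lam = min (infnorm l / infnorm (l - lh)) 1 in lam *\<^sub>R lh + (1 - lam) *\<^sub>R l)"

definition proper :: "('a \<Rightarrow> ereal) \<Rightarrow> bool" where
  "proper f \<longleftrightarrow> (\<forall>x. f x \<noteq> -\<infinity>) \<and> (\<exists>x. f x \<noteq> \<infinity>)"

definition subdiff :: "('a::real_inner \<Rightarrow> ereal) \<Rightarrow> 'a \<Rightarrow> 'a set" where
  "subdiff f x = {g. \<bar>f x\<bar> \<noteq> \<infinity> \<and> (\<forall>y. f x + ereal (g \<bullet> (y - x)) \<le> f y)}"

end

theory Submission
  imports Defs "HOL-Probability.Hoeffding"
begin


definition Zs :: "real^'n \<Rightarrow> real^'n \<Rightarrow> real" where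
  "Zs p x = (\<Sum>i\<in>UNIV. p$i * exp (x$i))"
definition tilt :: "real^'n \<Rightarrow> real^'n \<Rightarrow> real^'n" where
  "tilt p x = vnorm (had p (vexp x))"
definition KLr :: "real^'n \<Rightarrow> real^'n \<Rightarrow> real" where
  "KLr u p = (\<Sum>i\<in>UNIV. if u$i = 0 then 0 else u$i * ln (u$i / p$i))"
definition dot :: "real^'n \<Rightarrow> real^'n \<Rightarrow> real" where
  "dot u v = (\<Sum>i\<in>UNIV. u$i * v$i)"
definition sub :: "real^'n \<Rightarrow> real^'n \<Rightarrow> bool" where
  "sub u p = (\<forall>i. 0 < u$i \<longrightarrow> 0 < p$i)"

lemma simplexD: assumes "p \<in> prob_simplex" shows "\<And>i. 0 \<le> p$i" "(\<Sum>i\<in>UNIV. p$i) = 1"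
  using assms by (auto simp: prob_simplex_def)

lemma simplex_ex_pos: assumes "p \<in> prob_simplex" shows "\<exists>i. 0 < p$i"
proof (rule ccontr)
  assume "\<not> ?thesis"
  then have "\<And>i. p$i = 0" using simplexD(1)[OF assms] by (meson antisym not_less)
  then show False using simplexD(2)[OF assms] by simp
qed

lemma Zs_pos: assumes "p \<in> prob_simplex" shows "0 < Zs p x"
proof -
  obtain j where j: "0 < p$j" using simplex_ex_pos[OF assms] by blast
  show ?thesis unfolding Zs_def
    by (rule sum_pos2[of UNIV j]) (use j simplexD(1)[OF assms] in auto)
qed

lemma tilt_nth: assumes "p \<in> prob_simplex" shows "tilt p x $ i = p$i * exp (x$i) / Zs p x"
  unfolding tilt_def vnorm_def had_def vexp_def Zs_def by simp

lemma tilt_simplex: assumes "p \<in> prob_simplex" shows "tilt p x \<in> prob_simplex"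
proof -
  have Z: "0 < Zs p x" using Zs_pos[OF assms] .
  have "(\<Sum>i\<in>UNIV. tilt p x $ i) = (\<Sum>i\<in>UNIV. p$i * exp (x$i)) / Zs p x"
    by (simp add: tilt_nth[OF assms] sum_divide_distrib)
  also have "\<dots> = 1" using Z by (simp add: Zs_def)
  finally show ?thesis unfolding prob_simplex_def
    using Z simplexD(1)[OF assms] by (auto simp: tilt_nth[OF assms])
qed

lemma tilt_pos_iff: assumes "p \<in> prob_simplex" shows "0 < tilt p x $ i \<longleftrightarrow> 0 < p$i"
  using Zs_pos[OF assms, of x] simplexD(1)[OF assms, of i]
  by (auto simp: tilt_nth[OF assms] zero_less_mult_iff zero_less_divide_iff)

lemma Zs_tilt: assumes "p \<in> prob_simplex" shows "Zs (tilt p x) y = Zs p (x + y) / Zs p x"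
  unfolding Zs_def tilt_nth[OF assms]
  by (simp add: sum_divide_distrib[symmetric] exp_add algebra_simps)

lemma Zs_zero: assumes "p \<in> prob_simplex" shows "Zs p 0 = 1"
  using simplexD(2)[OF assms] by (simp add: Zs_def)

lemma KL_tilt:
  assumes p: "p \<in> prob_simplex" and u: "u \<in> prob_simplex" and s: "sub u p"
  shows "KLr u (tilt p x) = KLr u p - dot u x + ln (Zs p x)"
proof -
  have Z: "0 < Zs p x" using Zs_pos[OF p] .
  have "KLr u (tilt p x) = (\<Sum>i\<in>UNIV. (if u$i = 0 then 0 else u$i * ln (u$i / p$i)) - u$i * x$i + u$i * ln (Zs p x))"
    unfolding KLr_def
  proof (rule sum.cong[OF refl])
    fix i
    show "(if u$i = 0 then 0 else u$i * ln (u$i / tilt p x $ i)) = (if u$i = 0 then 0 else u$i * ln (u$i / p$i)) - u$i * x$i + u$i * ln (Zs p x)"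
    proof (cases "u$i = 0")
      case False
      then have ui: "0 < u$i" using simplexD(1)[OF u, of i] by simp
      then have pi: "0 < p$i" using s by (simp add: sub_def)
      have "u$i / tilt p x $ i = (u$i / p$i) * (Zs p x / exp (x$i))"
        using pi Z by (simp add: tilt_nth[OF p] field_simps)
      then have e: "ln (u$i / tilt p x $ i) = ln (u$i / p$i) - x$i + ln (Zs p x)"
        using pi Z ui by (simp add: ln_mult ln_div)
      show ?thesis using False by (simp add: e algebra_simps)
    qed simp
  qed
  also have "\<dots> = KLr u p - dot u x + ln (Zs p x)"
    using simplexD(2)[OF u]
    by (simp add: sum.distrib sum_subtractf KLr_def dot_def sum_distrib_right[symmetric])
  finally show ?thesis .
qed

lemma KLr_self: "KLr u u = 0"
  by (auto simp: KLr_def intro!: sum.neutral)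

lemma KLr_nonneg:
  assumes p: "p \<in> prob_simplex" and u: "u \<in> prob_simplex" and s: "sub u p"
  shows "0 \<le> KLr u p"
proof -
  have "(\<Sum>i\<in>UNIV. u$i - p$i) \<le> KLr u p"
    unfolding KLr_def
  proof (rule sum_mono)
    fix i
    show "u$i - p$i \<le> (if u$i = 0 then 0 else u$i * ln (u$i / p$i))"
    proof (cases "u$i = 0")
      case False
      then have ui: "0 < u$i" using simplexD(1)[OF u, of i] by simp
      then have pi: "0 < p$i" using s by (simp add: sub_def)
      have "ln (p$i / u$i) \<le> p$i / u$i - 1" using pi ui by (intro ln_le_minus_one) simp
      moreover have "ln (p$i / u$i) = - ln (u$i / p$i)" using pi ui by (simp add: ln_div)
      ultimately have "- ln (u$i / p$i) \<le> p$i / u$i - 1" by simp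
      then have "u$i * (- ln (u$i / p$i)) \<le> u$i * (p$i / u$i - 1)"
        using ui by (intro mult_left_mono) auto
      then show ?thesis using False ui by (simp add: algebra_simps)
    qed (use simplexD(1)[OF p, of i] in simp)
  qed
  then show ?thesis using simplexD(2)[OF u] simplexD(2)[OF p] by (simp add: sum_subtractf)
qed

lemma sub_tilt: assumes "p \<in> prob_simplex" "sub u p" shows "sub u (tilt p x)"
  using assms tilt_pos_iff[OF assms(1)] by (simp add: sub_def)

lemma sub_tilt_self: assumes "p \<in> prob_simplex" shows "sub (tilt p x) p"
  using tilt_pos_iff[OF assms] by (simp add: sub_def)

lemma gibbs:
  assumes p: "p \<in> prob_simplex" and q: "q \<in> prob_simplex" and s: "sub q p" and eta: "0 < \<eta>"
  shows "- (1/\<eta>) * ln (Zs p (- \<eta> *\<^sub>R L)) \<le> dot q L + KLr q p / \<eta>"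
proof -
  have "0 \<le> KLr q (tilt p (- \<eta> *\<^sub>R L))"
    by (rule KLr_nonneg[OF tilt_simplex[OF p] q sub_tilt[OF p s]])
  also have "\<dots> = KLr q p + \<eta> * dot q L + ln (Zs p (- \<eta> *\<^sub>R L))"
    by (simp add: KL_tilt[OF p q s] dot_def sum_distrib_left algebra_simps sum_negf)
  finally have h: "- ln (Zs p (- \<eta> *\<^sub>R L)) \<le> KLr q p + \<eta> * dot q L"
    by linarith
  have "- (1/\<eta>) * ln (Zs p (- \<eta> *\<^sub>R L)) = (- ln (Zs p (- \<eta> *\<^sub>R L))) / \<eta>" by simp
  also have "\<dots> \<le> (KLr q p + \<eta> * dot q L) / \<eta>" using h eta by (intro divide_right_mono) auto
  also have "\<dots> = dot q L + KLr q p / \<eta>" using eta by (simp add: field_simps)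
  finally show ?thesis .
qed

lemma gibbs_eq:
  assumes p: "p \<in> prob_simplex" and eta: "0 < \<eta>"
  shows "- (1/\<eta>) * ln (Zs p (- \<eta> *\<^sub>R L)) = dot (tilt p (- \<eta> *\<^sub>R L)) L + KLr (tilt p (- \<eta> *\<^sub>R L)) p / \<eta>"
proof -
  let ?q = "tilt p (- \<eta> *\<^sub>R L)"
  have "0 = KLr ?q ?q" by (simp add: KLr_self)
  also have "\<dots> = KLr ?q p + \<eta> * dot ?q L + ln (Zs p (- \<eta> *\<^sub>R L))"
    by (simp add: KL_tilt[OF p tilt_simplex[OF p] sub_tilt_self[OF p]] dot_def sum_distrib_left algebra_simps sum_negf)
  finally have h: "- ln (Zs p (- \<eta> *\<^sub>R L)) = KLr ?q p + \<eta> * dot ?q L" by linarith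
  have "- (1/\<eta>) * ln (Zs p (- \<eta> *\<^sub>R L)) = (- ln (Zs p (- \<eta> *\<^sub>R L))) / \<eta>" by simp
  also have "\<dots> = (KLr ?q p + \<eta> * dot ?q L) / \<eta>" using h by simp
  also have "\<dots> = dot ?q L + KLr ?q p / \<eta>" using eta by (simp add: field_simps)
  finally show ?thesis .
qed

lemma G_mono:
  assumes p: "p \<in> prob_simplex" and "0 < \<eta>'" "\<eta>' \<le> \<eta>"
  shows "- (1/\<eta>) * ln (Zs p (- \<eta> *\<^sub>R L)) \<le> - (1/\<eta>') * ln (Zs p (- \<eta>' *\<^sub>R L))"
proof -
  let ?q = "tilt p (- \<eta>' *\<^sub>R L)"
  have k: "0 \<le> KLr ?q p" by (rule KLr_nonneg[OF p tilt_simplex[OF p] sub_tilt_self[OF p]])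
  have "- (1/\<eta>) * ln (Zs p (- \<eta> *\<^sub>R L)) \<le> dot ?q L + KLr ?q p / \<eta>"
    using assms by (intro gibbs[OF p tilt_simplex[OF p] sub_tilt_self[OF p]]) auto
  also have "\<dots> \<le> dot ?q L + KLr ?q p / \<eta>'"
    using assms k by (intro add_left_mono divide_left_mono) auto
  also have "\<dots> = - (1/\<eta>') * ln (Zs p (- \<eta>' *\<^sub>R L))"
    using gibbs_eq[OF p assms(2)] by simp
  finally show ?thesis .
qed



lemma tanh_aux:
  fixes e :: real assumes "0 \<le> e"
  shows "2 * (exp e - 1) \<le> e * (exp e + 1)"
proof -
  define g where "g = (\<lambda>t::real. t * (exp t + 1) - 2 * (exp t - 1))"
  have "g 0 \<le> g e"
  proof (rule DERIV_nonneg_imp_increasing_open[OF assms])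
    fix x :: real assume "0 < x" "x < e"
    have d: "DERIV g x :> ((exp x + 1) + x * exp x - 2 * exp x)"
      unfolding g_def by (auto intro!: derivative_eq_intros)
    have "1 - x \<le> exp (- x)" using exp_ge_add_one_self[of "-x"] by simp
    then have "(1 - x) * exp x \<le> exp (-x) * exp x" by (intro mult_right_mono) auto
    then have "(1 - x) * exp x \<le> 1" by (simp add: exp_minus field_simps)
    then have "0 \<le> (exp x + 1) + x * exp x - 2 * exp x" by (simp add: algebra_simps)
    then show "\<exists>y. DERIV g x :> y \<and> 0 \<le> y" using d by blast
  next
    show "continuous_on {0..e} g" unfolding g_def by (intro continuous_intros)
  qed
  then show ?thesis by (simp add: g_def)
qed

lemma tanh_aux2:
  fixes e :: real assumes "0 \<le> e"
  shows "2 * (exp e + exp (-e) - 2) \<le> e * (exp e - exp (-e))"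
proof -
  define x where "x = exp e"
  have x1: "1 \<le> x" using assms by (simp add: x_def)
  have "2 * (x - 1) * (x - 1) \<le> e * (x + 1) * (x - 1)"
    using tanh_aux[OF assms] x1 by (intro mult_right_mono) (auto simp: x_def)
  note main = this
  have e1: "2 * (x + 1/x - 2) * x = 2 * (x - 1) * (x - 1)" using x1 by (simp add: field_simps)
  have "(x - 1/x) * x = (x + 1) * (x - 1)" using x1 by (simp add: field_simps)
  then have e2: "e * (x - 1/x) * x = e * (x + 1) * (x - 1)" by (simp add: mult.assoc)
  have "2 * (x + 1/x - 2) * x \<le> e * (x - 1/x) * x" unfolding e1 e2 by (rule main)
  then have "2 * (x + 1/x - 2) \<le> e * (x - 1/x)"
    using x1 by (simp add: mult_le_cancel_right)
  then show ?thesis by (simp add: x_def exp_minus inverse_eq_divide)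
qed

lemma tv_tilt0:
  assumes v: "v \<in> prob_simplex" and e: "0 \<le> \<epsilon>" and D: "\<And>i. \<bar>D$i\<bar> \<le> \<epsilon>"
  shows "(\<Sum>i\<in>UNIV. \<bar>tilt v D $ i - v$i\<bar>) \<le> \<epsilon>"
proof -
  define \<mu> where "\<mu> = Zs v D"
  have mu: "0 < \<mu>" using Zs_pos[OF v] by (simp add: \<mu>_def)
  define a where "a = exp (-\<epsilon>)"
  define b where "b = exp \<epsilon>"
  have ab: "a * b = 1" by (simp add: a_def b_def flip: exp_add)
  have aZ: "a \<le> exp (D$i)" and Zb: "exp (D$i) \<le> b" for i
    using D[of i] by (auto simp: a_def b_def abs_le_iff)
  have vi: "0 \<le> v$i" for i using simplexD(1)[OF v] .
  have sv: "(\<Sum>i\<in>UNIV. v$i) = 1" using simplexD(2)[OF v] .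
  have mu_def': "\<mu> = (\<Sum>i\<in>UNIV. v$i * exp (D$i))" by (simp add: \<mu>_def Zs_def)
  have amu: "a \<le> \<mu>"
  proof -
    have "(\<Sum>i\<in>UNIV. v$i * a) \<le> \<mu>" unfolding mu_def'
      by (rule sum_mono) (intro mult_left_mono aZ vi)
    then show ?thesis by (simp add: sum_distrib_right[symmetric] sv)
  qed
  have mub: "\<mu> \<le> b"
  proof -
    have "\<mu> \<le> (\<Sum>i\<in>UNIV. v$i * b)" unfolding mu_def'
      by (rule sum_mono) (intro mult_left_mono Zb vi)
    then show ?thesis by (simp add: sum_distrib_right[symmetric] sv)
  qed
  have chord: "(b - a) * \<bar>exp (D$i) - \<mu>\<bar> \<le> (b - exp (D$i)) * (\<mu> - a) + (exp (D$i) - a) * (b - \<mu>)" for i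
  proof -
    have p1: "0 \<le> (b - exp (D$i)) * (\<mu> - a)" using Zb[of i] amu by simp
    have p2: "0 \<le> (exp (D$i) - a) * (b - \<mu>)" using aZ[of i] mub by simp
    show ?thesis
    proof (cases "exp (D$i) \<ge> \<mu>")
      case True
      have "(b - exp (D$i)) * (\<mu> - a) + (exp (D$i) - a) * (b - \<mu>) - (b - a) * (exp (D$i) - \<mu>) = 2 * ((b - exp (D$i)) * (\<mu> - a))"
        by (simp add: algebra_simps)
      moreover have ha: "\<bar>exp (D$i) - \<mu>\<bar> = exp (D$i) - \<mu>" using True by simp
      ultimately show ?thesis using p1 unfolding ha by linarith
    next
      case False
      have "(b - exp (D$i)) * (\<mu> - a) + (exp (D$i) - a) * (b - \<mu>) - (b - a) * (\<mu> - exp (D$i)) = 2 * ((exp (D$i) - a) * (b - \<mu>))"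
        by (simp add: algebra_simps)
      moreover have ha: "\<bar>exp (D$i) - \<mu>\<bar> = \<mu> - exp (D$i)" using False by simp
      ultimately show ?thesis using p2 unfolding ha by linarith
    qed
  qed
  have S: "(b - a) * (\<Sum>i\<in>UNIV. v$i * \<bar>exp (D$i) - \<mu>\<bar>) \<le> 2 * ((b - \<mu>) * (\<mu> - a))"
  proof -
    have "(b - a) * (\<Sum>i\<in>UNIV. v$i * \<bar>exp (D$i) - \<mu>\<bar>) = (\<Sum>i\<in>UNIV. v$i * ((b - a) * \<bar>exp (D$i) - \<mu>\<bar>))"
      by (simp add: sum_distrib_left algebra_simps)
    also have "\<dots> \<le> (\<Sum>i\<in>UNIV. v$i * ((b - exp (D$i)) * (\<mu> - a) + (exp (D$i) - a) * (b - \<mu>)))"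
      by (rule sum_mono) (intro mult_left_mono chord vi)
    also have "\<dots> = (b * (\<Sum>i\<in>UNIV. v$i) - (\<Sum>i\<in>UNIV. v$i * exp (D$i))) * (\<mu> - a) + ((\<Sum>i\<in>UNIV. v$i * exp (D$i)) - a * (\<Sum>i\<in>UNIV. v$i)) * (b - \<mu>)"
      by (simp add: sum_distrib_left sum_distrib_right sum.distrib sum_subtractf algebra_simps)
    also have "\<dots> = 2 * ((b - \<mu>) * (\<mu> - a))" by (simp add: sv mu_def'[symmetric] algebra_simps)
    finally show ?thesis .
  qed
  have K: "2 * ((b - \<mu>) * (\<mu> - a)) \<le> \<epsilon> * \<mu> * (b - a)"
  proof -
    have "(b - \<mu>) * (\<mu> - a) = \<mu> * (a + b) - \<mu>^2 - a * b" by (simp add: algebra_simps power2_eq_square)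
    also have "\<dots> \<le> \<mu> * (a + b - 2)"
    proof -
      have "\<mu> * (a + b - 2) - (\<mu> * (a + b) - \<mu>^2 - a * b) = (\<mu> - 1)^2"
        using ab by (simp add: power2_eq_square algebra_simps)
      moreover have "0 \<le> (\<mu> - 1)^2" by simp
      ultimately show ?thesis by linarith
    qed
    finally have "2 * ((b - \<mu>) * (\<mu> - a)) \<le> \<mu> * (2 * (a + b - 2))" by (simp add: algebra_simps)
    also have "\<dots> \<le> \<mu> * (\<epsilon> * (b - a))"
      using tanh_aux2[OF e] mu by (intro mult_left_mono) (auto simp: a_def b_def add.commute)
    finally show ?thesis by (simp add: algebra_simps)
  qed
  have tvi: "\<bar>tilt v D $ i - v$i\<bar> = v$i * \<bar>exp (D$i) - \<mu>\<bar> / \<mu>" for i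
  proof -
    have "tilt v D $ i - v$i = v$i * (exp (D$i) - \<mu>) / \<mu>"
      using mu by (simp add: tilt_nth[OF v] \<mu>_def[symmetric] field_simps)
    then show ?thesis using mu vi[of i] by (simp add: abs_mult)
  qed
  show ?thesis
  proof (cases "\<epsilon> = 0")
    case True
    then have "D$i = 0" for i using D[of i] by simp
    then have "\<mu> = 1" using sv by (simp add: mu_def')
    then have "exp (D$i) - \<mu> = 0" for i using \<open>\<And>i. D$i = 0\<close> by simp
    then show ?thesis using True by (simp add: tvi)
  next
    case False
    then have "a < b" using e by (simp add: a_def b_def)
    have "(b - a) * (\<Sum>i\<in>UNIV. v$i * \<bar>exp (D$i) - \<mu>\<bar>) \<le> (b - a) * (\<epsilon> * \<mu>)"
      using S K by (simp add: algebra_simps)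
    then have "(\<Sum>i\<in>UNIV. v$i * \<bar>exp (D$i) - \<mu>\<bar>) \<le> \<epsilon> * \<mu>"
      using \<open>a < b\<close> by (simp add: mult_le_cancel_left)
    then have "(\<Sum>i\<in>UNIV. v$i * \<bar>exp (D$i) - \<mu>\<bar>) / \<mu> \<le> \<epsilon>"
      using mu by (simp add: divide_le_eq)
    then show ?thesis by (simp add: tvi sum_divide_distrib[symmetric])
  qed
qed

lemma tilt_tilt:
  assumes p: "p \<in> prob_simplex"
  shows "tilt (tilt p x') (x - x') = tilt p x"
proof -
  have sp: "tilt p x' \<in> prob_simplex" by (rule tilt_simplex[OF p])
  have Z: "Zs (tilt p x') (x - x') = Zs p x / Zs p x'" by (simp add: Zs_tilt[OF p])
  show ?thesis
    using Zs_pos[OF p, of x'] Zs_pos[OF p, of x]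
    by (simp add: vec_eq_iff tilt_nth[OF sp] tilt_nth[OF p] Z field_simps flip: exp_add)
qed

lemma tv_tilt:
  assumes p: "p \<in> prob_simplex" and e: "0 \<le> \<epsilon>" and D: "\<And>i. \<bar>x$i - x'$i\<bar> \<le> \<epsilon>"
  shows "(\<Sum>i\<in>UNIV. \<bar>tilt p x $ i - tilt p x' $ i\<bar>) \<le> \<epsilon>"
  using tv_tilt0[OF tilt_simplex[OF p, of x'] e, where D = "x - x'"] D by (simp add: tilt_tilt[OF p])

lemma tv_le2:
  assumes "w \<in> prob_simplex" "v \<in> prob_simplex"
  shows "(\<Sum>i\<in>UNIV. \<bar>w $ i - v $ i\<bar>) \<le> 2"
proof -
  have "(\<Sum>i\<in>UNIV. \<bar>w $ i - v $ i\<bar>) \<le> (\<Sum>i\<in>UNIV. w$i + v$i)"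
    by (rule sum_mono) (use simplexD(1)[OF assms(1)] simplexD(1)[OF assms(2)] in \<open>auto simp: abs_le_iff\<close>)
  then show ?thesis using simplexD(2)[OF assms(1)] simplexD(2)[OF assms(2)] by (simp add: sum.distrib)
qed



lemma exp4: "16 \<le> exp (4::real)"
proof -
  have "exp (4::real) = exp 1 ^ 4" using exp_of_nat_mult[of 4 "1::real"] by simp
  moreover have "(2::real) ^ 4 \<le> exp 1 ^ 4" using exp_ge_add_one_self[of "1::real"] by (intro power_mono) auto
  ultimately show ?thesis by simp
qed

lemma ln4: "5/4 \<le> ln (4::real)"
proof -
  have a: "3/4 \<le> exp (-(1/4::real))" using exp_ge_add_one_self[of "-(1/4::real)"] by simp
  have "exp (1/4::real) = 1 / exp (-(1/4))" by (simp add: exp_minus inverse_eq_divide)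
  also have "\<dots> \<le> 1 / (3/4)" using a by (intro divide_left_mono) auto
  finally have b: "exp (1/4::real) \<le> 4/3" by simp
  have "exp (5/4::real) = exp 1 * exp (1/4)" by (simp flip: exp_add)
  also have "\<dots> \<le> 3 * (4/3)" using exp_le b by (intro mult_mono) auto
  finally have "exp (5/4::real) \<le> 4" by simp
  then have "ln (exp (5/4::real)) \<le> ln 4" by (subst ln_le_cancel_iff) auto
  then show ?thesis by simp
qed

lemma tail_aux:
  fixes h s :: real
  assumes h: "4 < h" and s: "0 \<le> s" "s \<le> 1"
  shows "ln (1 + s * (exp h - 1)) - s * h \<le> h - 2"
proof -
  define B where "B = 1 + s * (exp h - 1)"
  have eh: "1 < exp h" using h by simp
  have Bpos: "0 < B" using s eh by (simp add: B_def add_pos_nonneg)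
  have "ln (4 * B / exp h) \<le> 4 * B / exp h - 1" using Bpos by (intro ln_le_minus_one) simp
  moreover have "ln (4 * B / exp h) = ln 4 + ln B - h" using Bpos by (simp add: ln_div ln_mult)
  moreover have "4 * B / exp h = 4 * exp (-h) + 4 * s * (1 - exp (-h))"
    by (simp add: B_def exp_minus field_simps)
  moreover have "4 * s * (1 - exp (-h)) \<le> 4 * s" using s by (simp add: mult_left_le)
  moreover have "exp (-h) \<le> 1/16"
  proof -
    have "exp 4 \<le> exp h" using h by simp
    then have "16 \<le> exp h" using exp4 by linarith
    then show ?thesis by (simp add: exp_minus inverse_eq_divide divide_le_eq)
  qed
  moreover have "4 * s \<le> s * h"
  proof -
    have "4 * s \<le> h * s" using s h by (intro mult_right_mono) auto
    then show ?thesis by (simp add: mult.commute)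
  qed
  ultimately show ?thesis using ln4 by (simp add: B_def[symmetric])
qed

lemma Qstar_small: "0 \<le> k \<Longrightarrow> k \<le> 2 \<Longrightarrow> Qstar 2 k = k^2 / 2"
  by (simp add: Qstar_def)

lemma Qstar_large: "2 < k \<Longrightarrow> Qstar 2 k = 2 * k - 2"
  by (simp add: Qstar_def power2_eq_square field_simps)

lemma mgf_bound:
  assumes w: "w \<in> prob_simplex" and Y: "\<And>i. \<bar>Y$i\<bar> \<le> \<kappa>"
  shows "ln (\<Sum>i\<in>UNIV. w$i * exp (Y$i)) - dot w Y \<le> Qstar 2 \<kappa>"
proof -
  have k0: "0 \<le> \<kappa>" using Y[of undefined] by linarith
  have wi: "0 \<le> w$i" for i using simplexD(1)[OF w] .
  have sw: "(\<Sum>i\<in>UNIV. w$i) = 1" using simplexD(2)[OF w] .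
  show ?thesis
  proof (cases "\<kappa> = 0")
    case True
    then have "Y$i = 0" for i using Y[of i] by simp
    then show ?thesis using True sw by (simp add: dot_def Qstar_def)
  next
    case False
    then have kp: "0 < \<kappa>" using k0 by simp
    define m where "m = dot w Y"
    define s where "s = (m + \<kappa>) / (2 * \<kappa>)"
    define h where "h = 2 * \<kappa>"
    have chord: "exp (Y$i) \<le> exp (-\<kappa>) + ((Y$i + \<kappa>) / (2*\<kappa>)) * (exp \<kappa> - exp (-\<kappa>))" for i
    proof -
      define t where "t = (Y$i + \<kappa>) / (2*\<kappa>)"
      have t0: "0 \<le> t" and t1: "t \<le> 1" using Y[of i] kp by (auto simp: t_def abs_le_iff field_simps)
      have "exp ((1 - t) * (-\<kappa>) + t * \<kappa>) \<le> (1 - t) * exp (-\<kappa>) + t * exp \<kappa>"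
        using convex_onD[OF convex_on_exp[of 1], of t "-\<kappa>" \<kappa>] t0 t1 by simp
      moreover have "(1 - t) * (-\<kappa>) + t * \<kappa> = Y$i" using kp by (simp add: t_def field_simps)
      ultimately have "exp (Y$i) \<le> (1 - t) * exp (-\<kappa>) + t * exp \<kappa>" by simp
      moreover have "(1 - t) * exp (-\<kappa>) + t * exp \<kappa> = exp (-\<kappa>) + t * (exp \<kappa> - exp (-\<kappa>))"
        by (simp add: algebra_simps)
      ultimately show ?thesis by (simp only: t_def)
    qed
    have mb: "\<bar>m\<bar> \<le> \<kappa>"
    proof -
      have "m \<le> (\<Sum>i\<in>UNIV. w$i * \<kappa>)" unfolding m_def dot_def
        by (rule sum_mono) (use Y wi in \<open>auto intro!: mult_left_mono simp: abs_le_iff\<close>)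
      moreover have "(\<Sum>i\<in>UNIV. w$i * (-\<kappa>)) \<le> m" unfolding m_def dot_def
      proof (rule sum_mono)
        fix i
        have "-\<kappa> \<le> Y$i" using Y[of i] by (simp add: abs_le_iff)
        then show "w$i * (-\<kappa>) \<le> w$i * Y$i" by (intro mult_left_mono wi)
      qed
      ultimately show ?thesis using sw by (simp add: sum_negf sum_distrib_right[symmetric] abs_le_iff)
    qed
    have s0: "0 \<le> s" and s1: "s \<le> 1" using mb kp by (auto simp: s_def abs_le_iff field_simps)
    define S where "S = (\<Sum>i\<in>UNIV. w$i * exp (Y$i))"
    have Spos: "0 < S" using Zs_pos[OF w, of Y] by (simp add: S_def Zs_def)
    have SA: "S \<le> exp (-\<kappa>) + s * (exp \<kappa> - exp (-\<kappa>))"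
    proof -
      have "S \<le> (\<Sum>i\<in>UNIV. w$i * (exp (-\<kappa>) + ((Y$i + \<kappa>) / (2*\<kappa>)) * (exp \<kappa> - exp (-\<kappa>))))"
        unfolding S_def by (rule sum_mono) (intro mult_left_mono chord wi)
      also have "\<dots> = (\<Sum>i\<in>UNIV. exp (-\<kappa>) * w$i + ((exp \<kappa> - exp (-\<kappa>)) / (2*\<kappa>)) * (w$i * Y$i) + ((exp \<kappa> - exp (-\<kappa>)) / 2) * w$i)"
        by (rule sum.cong[OF refl]) (use kp in \<open>simp add: field_simps\<close>)
      also have "\<dots> = exp (-\<kappa>) * (\<Sum>i\<in>UNIV. w$i) + ((exp \<kappa> - exp (-\<kappa>)) / (2*\<kappa>)) * m + ((exp \<kappa> - exp (-\<kappa>)) / 2) * (\<Sum>i\<in>UNIV. w$i)"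
        by (simp add: sum.distrib sum_distrib_left m_def dot_def)
      also have "\<dots> = exp (-\<kappa>) + s * (exp \<kappa> - exp (-\<kappa>))"
        using kp by (simp add: sw s_def field_simps)
      finally show ?thesis .
    qed
    have Bpos: "0 < 1 + s * (exp h - 1)" using s0 kp by (simp add: h_def add_pos_nonneg)
    have Aeq: "exp (-\<kappa>) + s * (exp \<kappa> - exp (-\<kappa>)) = exp (-\<kappa>) * (1 + s * (exp h - 1))"
      by (simp add: h_def algebra_simps flip: exp_add)
    have "ln S \<le> ln (exp (-\<kappa>) * (1 + s * (exp h - 1)))"
      using SA Spos Aeq by (subst ln_le_cancel_iff) (auto simp: Bpos)
    also have "\<dots> = -\<kappa> + ln (1 + s * (exp h - 1))" using Bpos by (simp add: ln_mult)
    finally have lnS: "ln S \<le> -\<kappa> + ln (1 + s * (exp h - 1))" .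
    have meq: "m = s * h - \<kappa>" using kp by (simp add: s_def h_def field_simps)
    have main: "ln S - m \<le> ln (1 + s * (exp h - 1)) - s * h" using lnS meq by simp
    show ?thesis
    proof (cases "\<kappa> \<le> 2")
      case True
      have "-h * s + ln (1 + s * (exp h - 1)) \<le> h^2 / 8"
        using Hoeffdings_lemma_aux[of h s] kp s0 by (simp add: h_def)
      then have "ln S - m \<le> \<kappa>^2 / 2" using main by (simp add: h_def power2_eq_square algebra_simps)
      then show ?thesis using Qstar_small[OF k0 True] by (simp add: S_def m_def)
    next
      case False
      have "ln (1 + s * (exp h - 1)) - s * h \<le> h - 2"
        using tail_aux[of h s] False s0 s1 by (simp add: h_def)
      then have "ln S - m \<le> 2 * \<kappa> - 2" using main by (simp add: h_def)
      then show ?thesis using Qstar_large[of \<kappa>] False by (simp add: S_def m_def)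
    qed
  qed
qed



lemma dot_scaleR_right: "dot w (c *\<^sub>R x) = c * dot w x"
  by (simp add: dot_def sum_distrib_left algebra_simps)
lemma dot_minus_right: "dot w (- x) = - dot w x"
  by (simp add: dot_def sum_negf)
lemma dot_diff_right: "dot w (x - y) = dot w x - dot w y"
  by (simp add: dot_def sum_subtractf algebra_simps)
lemma dot_add_right: "dot w (x + y) = dot w x + dot w y"
  by (simp add: dot_def sum.distrib algebra_simps)

lemma KL_tilt_self:
  assumes p: "p \<in> prob_simplex"
  shows "KLr (tilt p x) p = dot (tilt p x) x - ln (Zs p x)"
  using KL_tilt[OF p tilt_simplex[OF p] sub_tilt_self[OF p], of x x] by (simp add: KLr_self)

lemma round1:
  assumes p: "p \<in> prob_simplex" and eta: "0 < \<eta>" and c: "\<And>i. \<bar>l$i - h$i\<bar> \<le> c"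
  shows "dot (tilt p (- \<eta> *\<^sub>R h)) l + (1/\<eta>) * ln (Zs p (- \<eta> *\<^sub>R l))
         \<le> (1/\<eta>) * Qstar 2 (\<eta> * c) - KLr (tilt p (- \<eta> *\<^sub>R h)) p / \<eta>"
proof -
  define x where "x = - \<eta> *\<^sub>R h"
  define y where "y = - \<eta> *\<^sub>R (l - h)"
  define w where "w = tilt p x"
  have w: "w \<in> prob_simplex" unfolding w_def by (rule tilt_simplex[OF p])
  have xy: "x + y = - \<eta> *\<^sub>R l" by (simp add: x_def y_def algebra_simps)
  have Zx: "0 < Zs p x" by (rule Zs_pos[OF p])
  have Zw: "0 < Zs w y" by (rule Zs_pos[OF w])
  have Z: "Zs p (- \<eta> *\<^sub>R l) = Zs p x * Zs w y"
    using Zs_tilt[OF p, of x y] Zx by (simp add: w_def xy)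
  have KL: "KLr w p = - \<eta> * dot w h - ln (Zs p x)"
    using KL_tilt_self[OF p, of x] unfolding w_def x_def by (simp add: dot_minus_right dot_scaleR_right)
  have Yb: "\<bar>y$i\<bar> \<le> \<eta> * c" for i
    using c[of i] eta by (simp add: y_def abs_mult)
  have mgf: "ln (Zs w y) - dot w y \<le> Qstar 2 (\<eta> * c)"
    using mgf_bound[OF w Yb] by (simp add: Zs_def)
  have dy: "dot w y = - \<eta> * (dot w l - dot w h)"
    by (simp add: y_def dot_minus_right dot_scaleR_right dot_diff_right)
  have "\<eta> * (dot w l + (1/\<eta>) * ln (Zs p (- \<eta> *\<^sub>R l))) = \<eta> * dot w l + ln (Zs p x) + ln (Zs w y)"
    using eta Zx Zw unfolding Z by (simp add: ln_mult algebra_simps)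
  also have "\<dots> \<le> Qstar 2 (\<eta> * c) - KLr w p"
    using mgf dy KL by (simp add: algebra_simps)
  also have "\<dots> = \<eta> * ((1/\<eta>) * Qstar 2 (\<eta> * c) - KLr w p / \<eta>)"
    using eta by (simp add: field_simps)
  finally show ?thesis using eta by (simp add: w_def x_def mult_le_cancel_left_pos)
qed

lemma round2:
  assumes p: "p \<in> prob_simplex" and eta: "0 < \<eta>"
  shows "dot (tilt p (- \<eta> *\<^sub>R lh)) l + (1/\<eta>) * ln (Zs p (- \<eta> *\<^sub>R l))
         \<le> (1/\<eta>) * Phi \<eta> l lh - KLr (tilt p (- \<eta> *\<^sub>R hatprime l lh)) p / \<eta>"
proof -
  define N where "N = infnorm (l - lh)"
  define M where "M = infnorm l"
  define lam where "lam = min (M / N) 1"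
  define hp where "hp = hatprime l lh"
  have hp_def': "hp = lam *\<^sub>R lh + (1 - lam) *\<^sub>R l"
    by (simp add: hp_def hatprime_def Let_def lam_def M_def N_def)
  have N0: "0 \<le> N" and M0: "0 \<le> M" by (simp_all add: N_def M_def infnorm_pos_le)
  have lam0: "0 \<le> lam" and lam1: "lam \<le> 1" using N0 M0 by (auto simp: lam_def)
  have lamN1: "lam * N \<le> min N M"
  proof (cases "N = 0")
    case False
    then have "lam * N \<le> M / N * N" using N0 by (intro mult_right_mono) (auto simp: lam_def)
    also have "\<dots> = M" using False by simp
    finally show ?thesis using lam1 lam0 N0 mult_left_le_one_le[of N lam] by (simp add: mult.commute)
  qed (simp add: M0)
  have lamN2: "(1 - lam) * N \<le> max (N - M) 0"
  proof (cases "N = 0")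
    case False
    then have "N > 0" using N0 by simp
    show ?thesis
    proof (cases "M / N \<le> 1")
      case True
      then have "lam = M / N" by (simp add: lam_def)
      then show ?thesis using \<open>N > 0\<close> by (simp add: algebra_simps)
    next
      case False
      then show ?thesis by (simp add: lam_def)
    qed
  qed simp
  have d1: "\<bar>l$i - hp$i\<bar> \<le> min N M" for i
  proof -
    have "l$i - hp$i = lam * (l$i - lh$i)" by (simp add: hp_def' algebra_simps)
    then have "\<bar>l$i - hp$i\<bar> = lam * \<bar>l$i - lh$i\<bar>" using lam0 by (simp add: abs_mult)
    also have "\<dots> \<le> lam * N" using component_le_infnorm_cart[of "l - lh" i] lam0
      by (intro mult_left_mono) (auto simp: N_def)
    finally show ?thesis using lamN1 by simp
  qed
  have d2: "\<bar>(- \<eta> *\<^sub>R lh)$i - (- \<eta> *\<^sub>R hp)$i\<bar> \<le> \<eta> * max (N - M) 0" for i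
  proof -
    have "(- \<eta> *\<^sub>R lh)$i - (- \<eta> *\<^sub>R hp)$i = \<eta> * ((1 - lam) * (l$i - lh$i))"
      by (simp add: hp_def' algebra_simps)
    then have "\<bar>(- \<eta> *\<^sub>R lh)$i - (- \<eta> *\<^sub>R hp)$i\<bar> = \<eta> * ((1 - lam) * \<bar>l$i - lh$i\<bar>)"
      using lam1 eta by (simp add: abs_mult)
    also have "\<dots> \<le> \<eta> * ((1 - lam) * N)" using component_le_infnorm_cart[of "l - lh" i] lam1 eta
      by (intro mult_left_mono) (auto simp: N_def)
    also have "\<dots> \<le> \<eta> * max (N - M) 0" using lamN2 eta by (intro mult_left_mono) auto
    finally show ?thesis .
  qed
  define w where "w = tilt p (- \<eta> *\<^sub>R lh)"
  define v where "v = tilt p (- \<eta> *\<^sub>R hp)"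
  have w: "w \<in> prob_simplex" and v: "v \<in> prob_simplex" unfolding w_def v_def by (simp_all add: tilt_simplex[OF p])
  have R: "dot v l + (1/\<eta>) * ln (Zs p (- \<eta> *\<^sub>R l)) \<le> (1/\<eta>) * Qstar 2 (\<eta> * min N M) - KLr v p / \<eta>"
    unfolding v_def by (rule round1[OF p eta d1])
  have tv1: "(\<Sum>i\<in>UNIV. \<bar>w$i - v$i\<bar>) \<le> \<eta> * max (N - M) 0"
    unfolding w_def v_def by (rule tv_tilt[OF p _ d2]) (use eta in simp)
  have tv2: "(\<Sum>i\<in>UNIV. \<bar>w$i - v$i\<bar>) \<le> 2" by (rule tv_le2[OF w v])
  have "dot w l - dot v l = (\<Sum>i\<in>UNIV. (w$i - v$i) * l$i)"
    by (simp add: dot_def sum_subtractf algebra_simps)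
  also have "\<dots> \<le> (\<Sum>i\<in>UNIV. \<bar>w$i - v$i\<bar> * M)"
  proof (rule sum_mono)
    fix i
    have "(w$i - v$i) * l$i \<le> \<bar>(w$i - v$i) * l$i\<bar>" by simp
    also have "\<dots> = \<bar>w$i - v$i\<bar> * \<bar>l$i\<bar>" by (simp add: abs_mult)
    also have "\<dots> \<le> \<bar>w$i - v$i\<bar> * M" using component_le_infnorm_cart[of l i]
      by (intro mult_left_mono) (auto simp: M_def)
    finally show "(w$i - v$i) * l$i \<le> \<bar>w$i - v$i\<bar> * M" .
  qed
  also have "\<dots> = M * (\<Sum>i\<in>UNIV. \<bar>w$i - v$i\<bar>)" by (simp add: sum_distrib_left mult.commute)
  also have "\<dots> \<le> M * min (\<eta> * max (N - M) 0) 2" using tv1 tv2 M0 by (intro mult_left_mono) auto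
  finally have TV: "dot w l - dot v l \<le> M * min (\<eta> * max (N - M) 0) 2" .
  have Ph: "(1/\<eta>) * Phi \<eta> l lh = (1/\<eta>) * Qstar 2 (\<eta> * min N M) + M * min (\<eta> * max (N - M) 0) 2"
    using eta by (simp add: Phi_def N_def M_def field_simps)
  have "dot w l + (1/\<eta>) * ln (Zs p (- \<eta> *\<^sub>R l)) \<le> (1/\<eta>) * Phi \<eta> l lh - KLr v p / \<eta>"
    using R TV Ph by linarith
  then show ?thesis unfolding w_def v_def hp_def .
qed



lemma telesc:
  fixes x y f :: "nat \<Rightarrow> real"
  assumes "\<And>t. t \<in> {1..n} \<Longrightarrow> x t \<le> y t + f (Suc t) - f t"
  shows "(\<Sum>t\<in>{1..n}. x t) \<le> (\<Sum>t\<in>{1..n}. y t) + f (Suc n) - f 1"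
  using assms
proof (induction n)
  case 0
  then show ?case by simp
next
  case (Suc n)
  have IH: "(\<Sum>t\<in>{1..n}. x t) \<le> (\<Sum>t\<in>{1..n}. y t) + f (Suc n) - f 1"
    using Suc.prems by (intro Suc.IH) auto
  have "x (Suc n) \<le> y (Suc n) + f (Suc (Suc n)) - f (Suc n)" using Suc.prems by auto
  moreover have e: "{1..Suc n} = insert (Suc n) {1..n}" by auto
  ultimately show ?case using IH unfolding e by simp
qed

lemma dot_sum_right: "dot u (\<Sum>t\<in>A. f t) = (\<Sum>t\<in>A. dot u (f t))"
  by (simp add: dot_def sum_distrib_left sum.swap[of _ A])

lemma kl_fin: assumes "p \<in> prob_simplex" "sub q p" shows "kl q p = ereal (KLr q p)"
  using assms by (auto simp: kl_def KLr_def sub_def)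

lemma kl_inf: assumes "p \<in> prob_simplex" "\<not> sub q p" shows "kl q p = \<infinity>"
  using assms simplexD(1)[OF assms(1)] by (auto simp: kl_def sub_def) (meson antisym not_le)
  
lemma final_ereal:
  assumes X: "X = ereal x" and k: "\<And>t. t \<in> {1..T} \<Longrightarrow> k t = ereal (kr t)" and c: "0 < c"
    and K: "K = \<infinity> \<or> (K = ereal Kr \<and> x \<le> c * Kr + S - (\<Sum>t\<in>{1..T}. ct t * kr t))"
  shows "X \<le> ereal c * K + ereal S - (\<Sum>t\<in>{1..T}. ereal (ct t) * k t)"
proof -
  have sk: "(\<Sum>t\<in>{1..T}. ereal (ct t) * k t) = ereal (\<Sum>t\<in>{1..T}. ct t * kr t)"
    using k by (simp add: sum_ereal[symmetric] del: sum_ereal)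
  show ?thesis
  proof (cases "K = \<infinity>")
    case True
    then show ?thesis using c by (simp add: sk)
  next
    case False
    then show ?thesis using K X by (simp add: sk)
  qed
qed

lemma phi_fin:
  assumes "g \<in> subdiff f x" "subdiff f y \<noteq> {}"
  shows "f x = ereal (real_of_ereal (f x))" "f y = ereal (real_of_ereal (f y))"
    "real_of_ereal (f x) - real_of_ereal (f y) \<le> g \<bullet> (x - y)"
proof -
  obtain g' where "g' \<in> subdiff f y" using assms(2) by blast
  then have fy: "\<bar>f y\<bar> \<noteq> \<infinity>" by (simp add: subdiff_def)
  have fx: "\<bar>f x\<bar> \<noteq> \<infinity>" and le: "f x + ereal (g \<bullet> (y - x)) \<le> f y"
    using assms(1) by (auto simp: subdiff_def)
  show "f x = ereal (real_of_ereal (f x))" "f y = ereal (real_of_ereal (f y))"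
    using fx fy by (auto simp: ereal_real)
  obtain rx where rx: "f x = ereal rx" using fx by (cases "f x") auto
  obtain ry where ry: "f y = ereal ry" using fy by (cases "f y") auto
  have "rx + g \<bullet> (y - x) \<le> ry" using le rx ry by simp
  moreover have "g \<bullet> (y - x) = - (g \<bullet> (x - y))" by (simp add: inner_diff_right)
  ultimately show "real_of_ereal (f x) - real_of_ereal (f y) \<le> g \<bullet> (x - y)" using rx ry by simp
qed

lemma inner_dot: "(g::real^'n) \<bullet> (x - y) = dot x g - dot y g"
  by (simp add: inner_vec_def dot_def sum_subtractf algebra_simps)



lemma part1:
  fixes \<eta> :: "nat \<Rightarrow> real" and w wt l :: "nat \<Rightarrow> real^'n"
  assumes a: "a \<in> prob_simplex" and u: "u \<in> prob_simplex" and sua: "sub u a"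
    and mono: "\<forall>s t. 1 \<le> s \<longrightarrow> s \<le> t \<longrightarrow> t \<le> T + 1 \<longrightarrow> \<eta> t \<le> \<eta> s" and pos: "0 < \<eta> (T+1)"
    and wt: "\<forall>t\<in>{1..T}. wt t = tilt a (- \<eta> t *\<^sub>R (\<Sum>i\<in>{1..<t}. l i))"
    and rd: "\<And>t. t \<in> {1..T} \<Longrightarrow> dot (w t) (l t) + (1/\<eta> t) * ln (Zs (wt t) (- \<eta> t *\<^sub>R l t)) \<le> B t"
  shows "(\<Sum>t\<in>{1..T}. dot (w t) (l t) - dot u (l t)) \<le> (\<Sum>t\<in>{1..T}. B t) + KLr u a / \<eta> (T+1)"
proof -
  define L where "L t = (\<Sum>i\<in>{1..<t}. l i)" for t
  define G where "G e V = - (1/e) * ln (Zs a (- e *\<^sub>R V))" for e V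
  have etapos: "0 < \<eta> t" if "t \<in> {1..T+1}" for t
    using mono[rule_format, of t "T+1"] pos that by auto
  have step: "dot (w t) (l t) \<le> B t + G (\<eta> (Suc t)) (L (Suc t)) - G (\<eta> t) (L t)" if t: "t \<in> {1..T}" for t
  proof -
    have et: "0 < \<eta> t" and et1: "0 < \<eta> (Suc t)" using etapos t by auto
    have LS: "L (Suc t) = L t + l t" using t by (simp add: L_def sum.atLeastLessThan_Suc)
    have sum_eq: "- \<eta> t *\<^sub>R L t + - \<eta> t *\<^sub>R l t = - \<eta> t *\<^sub>R L (Suc t)"
      by (simp add: LS algebra_simps)
    have Z1: "0 < Zs a (- \<eta> t *\<^sub>R L t)" and Z2: "0 < Zs a (- \<eta> t *\<^sub>R L (Suc t))"
      by (simp_all add: Zs_pos[OF a])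
    have "Zs (wt t) (- \<eta> t *\<^sub>R l t) = Zs a (- \<eta> t *\<^sub>R L (Suc t)) / Zs a (- \<eta> t *\<^sub>R L t)"
    proof -
      have wtt: "wt t = tilt a (- \<eta> t *\<^sub>R L t)" using wt t by (simp add: L_def)
      show ?thesis unfolding wtt Zs_tilt[OF a] sum_eq ..
    qed
    then have "(1/\<eta> t) * ln (Zs (wt t) (- \<eta> t *\<^sub>R l t)) = G (\<eta> t) (L t) - G (\<eta> t) (L (Suc t))"
      using Z1 Z2 by (simp add: G_def ln_div algebra_simps)
    moreover have "G (\<eta> t) (L (Suc t)) \<le> G (\<eta> (Suc t)) (L (Suc t))"
      unfolding G_def by (rule G_mono[OF a et1]) (use mono t in auto)
    ultimately show ?thesis using rd[OF t] by linarith
  qed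
  have "(\<Sum>t\<in>{1..T}. dot (w t) (l t)) \<le> (\<Sum>t\<in>{1..T}. B t) + G (\<eta> (Suc T)) (L (Suc T)) - G (\<eta> 1) (L 1)"
    by (rule telesc) (rule step)
  moreover have "G (\<eta> 1) (L 1) = 0" by (simp add: G_def L_def Zs_zero[OF a])
  moreover have "G (\<eta> (Suc T)) (L (Suc T)) \<le> dot u (L (Suc T)) + KLr u a / \<eta> (Suc T)"
    unfolding G_def using gibbs[OF a u sua, of "\<eta> (Suc T)"] pos by simp
  moreover have "dot u (L (Suc T)) = (\<Sum>t\<in>{1..T}. dot u (l t))"
    by (simp add: L_def dot_sum_right atLeastLessThanSuc_atLeastAtMost)
  ultimately show ?thesis by (simp add: sum_subtractf)
qed

lemma part2:
  fixes \<theta> :: "nat \<Rightarrow> real" and w wt l :: "nat \<Rightarrow> real^'n"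
  assumes a: "a \<in> prob_simplex" and u: "u \<in> prob_simplex" and sua: "sub u a"
    and pos1: "0 < \<theta> 1" and mono: "\<forall>s t. 1 \<le> s \<longrightarrow> s \<le> t \<longrightarrow> t \<le> T \<longrightarrow> \<theta> s \<le> \<theta> t"
    and wt1: "wt 1 = a"
    and rec: "\<forall>t\<in>{2..T}. wt t = tilt (wt (t - 1)) (- \<theta> (t - 1) *\<^sub>R l (t - 1))"
    and rd: "\<And>t. t \<in> {1..T} \<Longrightarrow> dot (w t) (l t) + (1/\<theta> t) * ln (Zs (wt t) (- \<theta> t *\<^sub>R l t)) \<le> B t"
  shows "(\<Sum>t\<in>{1..T}. dot (w t) (l t) - dot u (l t)) \<le> (\<Sum>t\<in>{1..T}. B t) + KLr u a / \<theta> 1"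
proof -
  have inv: "t \<in> {1..T} \<Longrightarrow> wt t \<in> prob_simplex \<and> sub u (wt t)" for t
  proof (induction t)
    case 0 then show ?case by simp
  next
    case (Suc t)
    show ?case
    proof (cases "t = 0")
      case True then show ?thesis using wt1 a sua by simp
    next
      case False
      then have "t \<in> {1..T}" "Suc t \<in> {2..T}" using Suc.prems by auto
      then have p: "wt t \<in> prob_simplex" "sub u (wt t)" using Suc.IH by auto
      have "wt (Suc t) = tilt (wt t) (- \<theta> t *\<^sub>R l t)" using rec \<open>Suc t \<in> {2..T}\<close> by auto
      then show ?thesis using tilt_simplex[OF p(1)] sub_tilt[OF p] by simp
    qed
  qed
  have thpos: "0 < \<theta> t" if "t \<in> {1..T}" for t
    using mono[rule_format, of 1 t] pos1 that by auto
  define K where "K t = KLr u (wt t)" for t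
  have K0: "0 \<le> K t" if "t \<in> {1..T}" for t
    using inv[OF that] KLr_nonneg[of "wt t" u] u by (auto simp: K_def)
  define f where "f t = (if t \<le> T then - (K t / \<theta> t) else 0)" for t
  have step: "dot (w t) (l t) - dot u (l t) \<le> B t + f (Suc t) - f t" if t: "t \<in> {1..T}" for t
  proof -
    have th: "0 < \<theta> t" using thpos t .
    obtain p: "wt t \<in> prob_simplex" "sub u (wt t)" using inv[OF t] by blast
    define q where "q = tilt (wt t) (- \<theta> t *\<^sub>R l t)"
    have Zp: "0 < Zs (wt t) (- \<theta> t *\<^sub>R l t)" by (rule Zs_pos[OF p(1)])
    have Kq: "KLr u q = K t + \<theta> t * dot u (l t) + ln (Zs (wt t) (- \<theta> t *\<^sub>R l t))"
      using KL_tilt[OF p(1) u p(2)] by (simp add: q_def K_def dot_minus_right dot_scaleR_right)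
    have Kq0: "0 \<le> KLr u q" unfolding q_def by (rule KLr_nonneg[OF tilt_simplex[OF p(1)] u sub_tilt[OF p]])
    have e1: "- dot u (l t) = (1/\<theta> t) * ln (Zs (wt t) (- \<theta> t *\<^sub>R l t)) + (K t - KLr u q) / \<theta> t"
      using th unfolding Kq by (simp add: field_simps)
    have e2: "(K t - KLr u q) / \<theta> t \<le> f (Suc t) - f t"
    proof (cases "Suc t \<le> T")
      case True
      then have "Suc t \<in> {2..T}" "Suc t \<in> {1..T}" using t by auto
      then have qe: "q = wt (Suc t)" using rec by (simp add: q_def)
      have "K (Suc t) / \<theta> (Suc t) \<le> K (Suc t) / \<theta> t"
        using K0[OF \<open>Suc t \<in> {1..T}\<close>] th thpos[OF \<open>Suc t \<in> {1..T}\<close>] mono True t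
        by (intro divide_left_mono) auto
      then show ?thesis using True t qe by (simp add: f_def K_def diff_divide_distrib)
    next
      case False
      then have "f (Suc t) = 0" by (simp add: f_def)
      moreover have "f t = - (K t / \<theta> t)" using t by (simp add: f_def)
      moreover have "(K t - KLr u q) / \<theta> t \<le> K t / \<theta> t" using Kq0 th by (intro divide_right_mono) auto
      ultimately show ?thesis by simp
    qed
    show ?thesis using rd[OF t] e1 e2 by linarith
  qed
  have "(\<Sum>t\<in>{1..T}. dot (w t) (l t) - dot u (l t)) \<le> (\<Sum>t\<in>{1..T}. B t) + f (Suc T) - f 1"
    by (rule telesc) (rule step)
  moreover have "f (Suc T) = 0" by (simp add: f_def)
  moreover have "- f 1 \<le> KLr u a / \<theta> 1"
    using KLr_nonneg[OF a u sua] pos1 wt1 by (simp add: f_def K_def)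
  ultimately show ?thesis by linarith
qed



lemma conclude:
  fixes \<phi> :: "nat \<Rightarrow> real^'n \<Rightarrow> ereal" and l w :: "nat \<Rightarrow> real^'n"
  assumes dom: "\<forall>t\<in>{1..T}. prob_simplex \<subseteq> {x. subdiff (\<phi> t) x \<noteq> {}}"
    and u: "u \<in> prob_simplex"
    and sg: "\<forall>t\<in>{1..T}. l t \<in> subdiff (\<phi> t) (w t)"
    and k: "\<And>t. t \<in> {1..T} \<Longrightarrow> k t = ereal (kr t)" and c: "0 < c"
    and K: "K = \<infinity> \<or> (K = ereal Kr \<and> (\<Sum>t\<in>{1..T}. dot (w t) (l t) - dot u (l t)) \<le> c * Kr + S - (\<Sum>t\<in>{1..T}. ct t * kr t))"
  shows "(\<Sum>t\<in>{1..T}. \<phi> t (w t)) - (\<Sum>t\<in>{1..T}. \<phi> t u) \<le> ereal c * K + ereal S - (\<Sum>t\<in>{1..T}. ereal (ct t) * k t)"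
proof -
  define r1 where "r1 t = real_of_ereal (\<phi> t (w t))" for t
  define r2 where "r2 t = real_of_ereal (\<phi> t u)" for t
  have pf: "\<phi> t (w t) = ereal (r1 t)" "\<phi> t u = ereal (r2 t)" "r1 t - r2 t \<le> l t \<bullet> (w t - u)"
    if t: "t \<in> {1..T}" for t
  proof -
    have s1: "l t \<in> subdiff (\<phi> t) (w t)" using sg t by auto
    have "prob_simplex \<subseteq> {x. subdiff (\<phi> t) x \<noteq> {}}" using dom t by blast
    then have s2: "subdiff (\<phi> t) u \<noteq> {}" using u by blast
    show "\<phi> t (w t) = ereal (r1 t)" "\<phi> t u = ereal (r2 t)" "r1 t - r2 t \<le> l t \<bullet> (w t - u)"
      using phi_fin[OF s1 s2] by (simp_all add: r1_def r2_def)
  qed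
  have X: "(\<Sum>t\<in>{1..T}. \<phi> t (w t)) - (\<Sum>t\<in>{1..T}. \<phi> t u) = ereal ((\<Sum>t\<in>{1..T}. r1 t) - (\<Sum>t\<in>{1..T}. r2 t))"
  proof -
    have "(\<Sum>t\<in>{1..T}. \<phi> t (w t)) = (\<Sum>t\<in>{1..T}. ereal (r1 t))" by (rule sum.cong) (simp_all add: pf)
    moreover have "(\<Sum>t\<in>{1..T}. \<phi> t u) = (\<Sum>t\<in>{1..T}. ereal (r2 t))" by (rule sum.cong) (simp_all add: pf)
    ultimately show ?thesis by simp
  qed
  have D: "(\<Sum>t\<in>{1..T}. r1 t) - (\<Sum>t\<in>{1..T}. r2 t) \<le> (\<Sum>t\<in>{1..T}. dot (w t) (l t) - dot u (l t))"
    unfolding sum_subtractf[symmetric] by (rule sum_mono) (use pf(3) in \<open>simp add: inner_dot\<close>)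
  show ?thesis
    by (rule final_ereal[OF X k c]) (use K D in auto)
qed

lemma main1:
  fixes \<phi> :: "nat \<Rightarrow> real^'n \<Rightarrow> ereal"
    and l lh :: "nat \<Rightarrow> real^'n"
    and a u :: "real^'n"
    and T :: nat and \<eta> :: "nat \<Rightarrow> real" and w wt :: "nat \<Rightarrow> real^'n"
  assumes dom: "\<forall>t\<in>{1..T}. prob_simplex \<subseteq> {x. subdiff (\<phi> t) x \<noteq> {}}"
    and a: "a \<in> prob_simplex"
    and u: "u \<in> prob_simplex"
    and mono: "\<forall>s t. 1 \<le> s \<longrightarrow> s \<le> t \<longrightarrow> t \<le> T + 1 \<longrightarrow> \<eta> t \<le> \<eta> s" and pos: "0 < \<eta> (T + 1)"
    and wtH: "\<forall>t\<in>{1..T}. wt t = vnorm (had a (vexp (- \<eta> t *\<^sub>R (\<Sum>i\<in>{1..<t}. l i))))"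
    and wH: "\<forall>t\<in>{1..T}. w t = vnorm (had (wt t) (vexp (- \<eta> t *\<^sub>R lh t)))"
    and sg: "\<forall>t\<in>{1..T}. l t \<in> subdiff (\<phi> t) (w t)"
  shows "(\<Sum>t\<in>{1..T}. \<phi> t (w t)) - (\<Sum>t\<in>{1..T}. \<phi> t u)
         \<le> ereal (1 / \<eta> (T + 1)) * kl u a
           + ereal (\<Sum>t\<in>{1..T}. 1 / \<eta> t * Qstar 2 (\<eta> t * infnorm (l t - lh t)))
           - (\<Sum>t\<in>{1..T}. ereal (1 / \<eta> t) * kl (w t) (wt t))
       \<and>
       (\<Sum>t\<in>{1..T}. \<phi> t (w t)) - (\<Sum>t\<in>{1..T}. \<phi> t u)
         \<le> ereal (1 / \<eta> (T + 1)) * kl u a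
           + ereal (\<Sum>t\<in>{1..T}. 1 / \<eta> t * Phi (\<eta> t) (l t) (lh t))
           - (\<Sum>t\<in>{1..T}. ereal (1 / \<eta> t) *
                kl (vnorm (had (wt t) (vexp (- \<eta> t *\<^sub>R hatprime (l t) (lh t))))) (wt t))"
proof -
  have wt': "\<forall>t\<in>{1..T}. wt t = tilt a (- \<eta> t *\<^sub>R (\<Sum>i\<in>{1..<t}. l i))" using wtH by (simp add: tilt_def)
  have w': "w t = tilt (wt t) (- \<eta> t *\<^sub>R lh t)" if "t \<in> {1..T}" for t using wH that by (simp add: tilt_def)
  have etapos: "0 < \<eta> t" if "t \<in> {1..T+1}" for t
    using mono[rule_format, of t "T+1"] pos that by auto
  have wts: "wt t \<in> prob_simplex" if "t \<in> {1..T}" for t using wt' that tilt_simplex[OF a] by auto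
  define v where "v t = tilt (wt t) (- \<eta> t *\<^sub>R hatprime (l t) (lh t))" for t
  have kw: "kl (w t) (wt t) = ereal (KLr (w t) (wt t))" if "t \<in> {1..T}" for t
    using kl_fin[OF wts[OF that] sub_tilt_self[OF wts[OF that]]] w'[OF that] by simp
  have kv: "kl (vnorm (had (wt t) (vexp (- \<eta> t *\<^sub>R hatprime (l t) (lh t))))) (wt t) = ereal (KLr (v t) (wt t))" if "t \<in> {1..T}" for t
    using kl_fin[OF wts[OF that] sub_tilt_self[OF wts[OF that]]] by (simp add: v_def tilt_def)
  have c: "0 < 1 / \<eta> (T + 1)" using pos by simp
  have Ksplit: "kl u a = \<infinity> \<or> (kl u a = ereal (KLr u a) \<and> sub u a)"
    using kl_fin[OF a] kl_inf[OF a] by blast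
  show ?thesis
  proof
    show "(\<Sum>t\<in>{1..T}. \<phi> t (w t)) - (\<Sum>t\<in>{1..T}. \<phi> t u)
         \<le> ereal (1 / \<eta> (T + 1)) * kl u a
           + ereal (\<Sum>t\<in>{1..T}. 1 / \<eta> t * Qstar 2 (\<eta> t * infnorm (l t - lh t)))
           - (\<Sum>t\<in>{1..T}. ereal (1 / \<eta> t) * kl (w t) (wt t))"
    proof (rule conclude[OF dom u sg kw c])
      show "kl u a = \<infinity> \<or> (kl u a = ereal (KLr u a) \<and> (\<Sum>t\<in>{1..T}. dot (w t) (l t) - dot u (l t))
          \<le> 1 / \<eta> (T + 1) * KLr u a + (\<Sum>t\<in>{1..T}. 1 / \<eta> t * Qstar 2 (\<eta> t * infnorm (l t - lh t)))
             - (\<Sum>t\<in>{1..T}. 1 / \<eta> t * KLr (w t) (wt t)))"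
      proof (cases "sub u a")
        case True
        have "(\<Sum>t\<in>{1..T}. dot (w t) (l t) - dot u (l t))
           \<le> (\<Sum>t\<in>{1..T}. 1 / \<eta> t * Qstar 2 (\<eta> t * infnorm (l t - lh t)) - KLr (w t) (wt t) / \<eta> t) + KLr u a / \<eta> (T+1)"
        proof (rule part1[OF a u True mono pos wt'])
          fix t assume t: "t \<in> {1..T}"
          have "\<bar>l t $ i - lh t $ i\<bar> \<le> infnorm (l t - lh t)" for i
            using component_le_infnorm_cart[of "l t - lh t" i] by simp
          then show "dot (w t) (l t) + 1 / \<eta> t * ln (Zs (wt t) (- \<eta> t *\<^sub>R l t))
              \<le> 1 / \<eta> t * Qstar 2 (\<eta> t * infnorm (l t - lh t)) - KLr (w t) (wt t) / \<eta> t"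
            using round1[OF wts[OF t] etapos[of t]] t w'[OF t] by simp
        qed
        then show ?thesis using True Ksplit
          by (simp add: sum_subtractf sum_distrib_left) 
      qed (use Ksplit in auto)
    qed
  next
    show "(\<Sum>t\<in>{1..T}. \<phi> t (w t)) - (\<Sum>t\<in>{1..T}. \<phi> t u)
         \<le> ereal (1 / \<eta> (T + 1)) * kl u a
           + ereal (\<Sum>t\<in>{1..T}. 1 / \<eta> t * Phi (\<eta> t) (l t) (lh t))
           - (\<Sum>t\<in>{1..T}. ereal (1 / \<eta> t) *
                kl (vnorm (had (wt t) (vexp (- \<eta> t *\<^sub>R hatprime (l t) (lh t))))) (wt t))"
    proof (rule conclude[OF dom u sg kv c])
      show "kl u a = \<infinity> \<or> (kl u a = ereal (KLr u a) \<and> (\<Sum>t\<in>{1..T}. dot (w t) (l t) - dot u (l t))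
          \<le> 1 / \<eta> (T + 1) * KLr u a + (\<Sum>t\<in>{1..T}. 1 / \<eta> t * Phi (\<eta> t) (l t) (lh t))
             - (\<Sum>t\<in>{1..T}. 1 / \<eta> t * KLr (v t) (wt t)))"
      proof (cases "sub u a")
        case True
        have "(\<Sum>t\<in>{1..T}. dot (w t) (l t) - dot u (l t))
           \<le> (\<Sum>t\<in>{1..T}. 1 / \<eta> t * Phi (\<eta> t) (l t) (lh t) - KLr (v t) (wt t) / \<eta> t) + KLr u a / \<eta> (T+1)"
        proof (rule part1[OF a u True mono pos wt'])
          fix t assume t: "t \<in> {1..T}"
          show "dot (w t) (l t) + 1 / \<eta> t * ln (Zs (wt t) (- \<eta> t *\<^sub>R l t))
              \<le> 1 / \<eta> t * Phi (\<eta> t) (l t) (lh t) - KLr (v t) (wt t) / \<eta> t"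
            using round2[OF wts[OF t] etapos[of t]] t w'[OF t] by (simp add: v_def)
        qed
        then show ?thesis using True Ksplit
          by (simp add: sum_subtractf sum_distrib_left) 
      qed (use Ksplit in auto)
    qed
  qed
qed

lemma main2:
  fixes \<phi> :: "nat \<Rightarrow> real^'n \<Rightarrow> ereal"
    and l lh :: "nat \<Rightarrow> real^'n"
    and a u :: "real^'n"
    and T :: nat and \<theta> :: "nat \<Rightarrow> real" and w wt :: "nat \<Rightarrow> real^'n"
  assumes dom: "\<forall>t\<in>{1..T}. prob_simplex \<subseteq> {x. subdiff (\<phi> t) x \<noteq> {}}"
    and a: "a \<in> prob_simplex"
    and u: "u \<in> prob_simplex"
    and pos1: "0 < \<theta> 1" and mono: "\<forall>s t. 1 \<le> s \<longrightarrow> s \<le> t \<longrightarrow> t \<le> T \<longrightarrow> \<theta> s \<le> \<theta> t"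
    and wt1: "wt 1 = a"
    and recH: "\<forall>t\<in>{2..T}. wt t = vnorm (had (wt (t - 1)) (vexp (- \<theta> (t - 1) *\<^sub>R l (t - 1))))"
    and wH: "\<forall>t\<in>{1..T}. w t = vnorm (had (wt t) (vexp (- \<theta> t *\<^sub>R lh t)))"
    and sg: "\<forall>t\<in>{1..T}. l t \<in> subdiff (\<phi> t) (w t)"
  shows "(\<Sum>t\<in>{1..T}. \<phi> t (w t)) - (\<Sum>t\<in>{1..T}. \<phi> t u)
         \<le> ereal (1 / \<theta> 1) * kl u a
           + ereal (\<Sum>t\<in>{1..T}. 1 / \<theta> t * Qstar 2 (\<theta> t * infnorm (l t - lh t)))
           - (\<Sum>t\<in>{1..T}. ereal (1 / \<theta> t) * kl (w t) (wt t))
       \<and>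
       (\<Sum>t\<in>{1..T}. \<phi> t (w t)) - (\<Sum>t\<in>{1..T}. \<phi> t u)
         \<le> ereal (1 / \<theta> 1) * kl u a
           + ereal (\<Sum>t\<in>{1..T}. 1 / \<theta> t * Phi (\<theta> t) (l t) (lh t))
           - (\<Sum>t\<in>{1..T}. ereal (1 / \<theta> t) *
                kl (vnorm (had (wt t) (vexp (- \<theta> t *\<^sub>R hatprime (l t) (lh t))))) (wt t))"
proof -
  have rec: "\<forall>t\<in>{2..T}. wt t = tilt (wt (t - 1)) (- \<theta> (t - 1) *\<^sub>R l (t - 1))" using recH by (simp add: tilt_def)
  have w': "w t = tilt (wt t) (- \<theta> t *\<^sub>R lh t)" if "t \<in> {1..T}" for t using wH that by (simp add: tilt_def)
  have thpos: "0 < \<theta> t" if "t \<in> {1..T}" for t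
    using mono[rule_format, of 1 t] pos1 that by auto
  have wts: "t \<in> {1..T} \<Longrightarrow> wt t \<in> prob_simplex" for t
  proof (induction t)
    case 0 then show ?case by simp
  next
    case (Suc t)
    show ?case
    proof (cases "t = 0")
      case True then show ?thesis using wt1 a by simp
    next
      case False
      then have "t \<in> {1..T}" "Suc t \<in> {2..T}" using Suc.prems by auto
      then have p: "wt t \<in> prob_simplex" using Suc.IH by auto
      have "wt (Suc t) = tilt (wt t) (- \<theta> t *\<^sub>R l t)" using rec \<open>Suc t \<in> {2..T}\<close> by auto
      then show ?thesis using tilt_simplex[OF p] by simp
    qed
  qed
  define v where "v t = tilt (wt t) (- \<theta> t *\<^sub>R hatprime (l t) (lh t))" for t
  have kw: "kl (w t) (wt t) = ereal (KLr (w t) (wt t))" if "t \<in> {1..T}" for t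
    using kl_fin[OF wts[OF that] sub_tilt_self[OF wts[OF that]]] w'[OF that] by simp
  have kv: "kl (vnorm (had (wt t) (vexp (- \<theta> t *\<^sub>R hatprime (l t) (lh t))))) (wt t) = ereal (KLr (v t) (wt t))" if "t \<in> {1..T}" for t
    using kl_fin[OF wts[OF that] sub_tilt_self[OF wts[OF that]]] by (simp add: v_def tilt_def)
  have c: "0 < 1 / \<theta> 1" using pos1 by simp
  have Ksplit: "kl u a = \<infinity> \<or> (kl u a = ereal (KLr u a) \<and> sub u a)"
    using kl_fin[OF a] kl_inf[OF a] by blast
  show ?thesis
  proof
    show "(\<Sum>t\<in>{1..T}. \<phi> t (w t)) - (\<Sum>t\<in>{1..T}. \<phi> t u)
         \<le> ereal (1 / \<theta> 1) * kl u a
           + ereal (\<Sum>t\<in>{1..T}. 1 / \<theta> t * Qstar 2 (\<theta> t * infnorm (l t - lh t)))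
           - (\<Sum>t\<in>{1..T}. ereal (1 / \<theta> t) * kl (w t) (wt t))"
    proof (rule conclude[OF dom u sg kw c])
      show "kl u a = \<infinity> \<or> (kl u a = ereal (KLr u a) \<and> (\<Sum>t\<in>{1..T}. dot (w t) (l t) - dot u (l t))
          \<le> 1 / \<theta> 1 * KLr u a + (\<Sum>t\<in>{1..T}. 1 / \<theta> t * Qstar 2 (\<theta> t * infnorm (l t - lh t)))
             - (\<Sum>t\<in>{1..T}. 1 / \<theta> t * KLr (w t) (wt t)))"
      proof (cases "sub u a")
        case True
        have "(\<Sum>t\<in>{1..T}. dot (w t) (l t) - dot u (l t))
           \<le> (\<Sum>t\<in>{1..T}. 1 / \<theta> t * Qstar 2 (\<theta> t * infnorm (l t - lh t)) - KLr (w t) (wt t) / \<theta> t) + KLr u a / \<theta> 1"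
        proof (rule part2[OF a u True pos1 mono wt1 rec])
          fix t assume t: "t \<in> {1..T}"
          have "\<bar>l t $ i - lh t $ i\<bar> \<le> infnorm (l t - lh t)" for i
            using component_le_infnorm_cart[of "l t - lh t" i] by simp
          then show "dot (w t) (l t) + 1 / \<theta> t * ln (Zs (wt t) (- \<theta> t *\<^sub>R l t))
              \<le> 1 / \<theta> t * Qstar 2 (\<theta> t * infnorm (l t - lh t)) - KLr (w t) (wt t) / \<theta> t"
            using round1[OF wts[OF t] thpos[OF t]] t w'[OF t] by simp
        qed
        then show ?thesis using True Ksplit
          by (simp add: sum_subtractf sum_distrib_left) 
      qed (use Ksplit in auto)
    qed
  next
    show "(\<Sum>t\<in>{1..T}. \<phi> t (w t)) - (\<Sum>t\<in>{1..T}. \<phi> t u)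
         \<le> ereal (1 / \<theta> 1) * kl u a
           + ereal (\<Sum>t\<in>{1..T}. 1 / \<theta> t * Phi (\<theta> t) (l t) (lh t))
           - (\<Sum>t\<in>{1..T}. ereal (1 / \<theta> t) *
                kl (vnorm (had (wt t) (vexp (- \<theta> t *\<^sub>R hatprime (l t) (lh t))))) (wt t))"
    proof (rule conclude[OF dom u sg kv c])
      show "kl u a = \<infinity> \<or> (kl u a = ereal (KLr u a) \<and> (\<Sum>t\<in>{1..T}. dot (w t) (l t) - dot u (l t))
          \<le> 1 / \<theta> 1 * KLr u a + (\<Sum>t\<in>{1..T}. 1 / \<theta> t * Phi (\<theta> t) (l t) (lh t))
             - (\<Sum>t\<in>{1..T}. 1 / \<theta> t * KLr (v t) (wt t)))"
      proof (cases "sub u a")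
        case True
        have "(\<Sum>t\<in>{1..T}. dot (w t) (l t) - dot u (l t))
           \<le> (\<Sum>t\<in>{1..T}. 1 / \<theta> t * Phi (\<theta> t) (l t) (lh t) - KLr (v t) (wt t) / \<theta> t) + KLr u a / \<theta> 1"
        proof (rule part2[OF a u True pos1 mono wt1 rec])
          fix t assume t: "t \<in> {1..T}"
          show "dot (w t) (l t) + 1 / \<theta> t * ln (Zs (wt t) (- \<theta> t *\<^sub>R l t))
              \<le> 1 / \<theta> t * Phi (\<theta> t) (l t) (lh t) - KLr (v t) (wt t) / \<theta> t"
            using round2[OF wts[OF t] thpos[OF t]] t w'[OF t] by (simp add: v_def)
        qed
        then show ?thesis using True Ksplit
          by (simp add: sum_subtractf sum_distrib_left) 
      qed (use Ksplit in auto)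
    qed
  qed
qed

theorem corollary4:
  fixes \<phi> :: "nat \<Rightarrow> real^'n \<Rightarrow> ereal"
    and l lh :: "nat \<Rightarrow> real^'n"
    and a u :: "real^'n"
    and T :: nat
  assumes proper: "\<forall>t\<in>{1..T}. proper (\<phi> t)"
    and dom: "\<forall>t\<in>{1..T}. prob_simplex \<subseteq> {x. subdiff (\<phi> t) x \<noteq> {}}"
    and a: "a \<in> prob_simplex"
    and u: "u \<in> prob_simplex"
  shows
   "(\<forall>(\<eta>::nat \<Rightarrow> real) (w::nat \<Rightarrow> real^'n) (wt::nat \<Rightarrow> real^'n).
      (\<forall>s t. 1 \<le> s \<longrightarrow> s \<le> t \<longrightarrow> t \<le> T + 1 \<longrightarrow> \<eta> t \<le> \<eta> s) \<longrightarrow> 0 < \<eta> (T + 1) \<longrightarrow>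
      (\<forall>t\<in>{1..T}. wt t = vnorm (had a (vexp (- \<eta> t *\<^sub>R (\<Sum>i\<in>{1..<t}. l i))))) \<longrightarrow>
      (\<forall>t\<in>{1..T}. w t = vnorm (had (wt t) (vexp (- \<eta> t *\<^sub>R lh t)))) \<longrightarrow>
      (\<forall>t\<in>{1..T}. l t \<in> subdiff (\<phi> t) (w t)) \<longrightarrow>
      ((\<Sum>t\<in>{1..T}. \<phi> t (w t)) - (\<Sum>t\<in>{1..T}. \<phi> t u)
         \<le> ereal (1 / \<eta> (T + 1)) * kl u a
           + ereal (\<Sum>t\<in>{1..T}. 1 / \<eta> t * Qstar 2 (\<eta> t * infnorm (l t - lh t)))
           - (\<Sum>t\<in>{1..T}. ereal (1 / \<eta> t) * kl (w t) (wt t))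
       \<and>
       (\<Sum>t\<in>{1..T}. \<phi> t (w t)) - (\<Sum>t\<in>{1..T}. \<phi> t u)
         \<le> ereal (1 / \<eta> (T + 1)) * kl u a
           + ereal (\<Sum>t\<in>{1..T}. 1 / \<eta> t * Phi (\<eta> t) (l t) (lh t))
           - (\<Sum>t\<in>{1..T}. ereal (1 / \<eta> t) *
                kl (vnorm (had (wt t) (vexp (- \<eta> t *\<^sub>R hatprime (l t) (lh t))))) (wt t))))
    \<and>
    (\<forall>(\<theta>::nat \<Rightarrow> real) (w::nat \<Rightarrow> real^'n) (wt::nat \<Rightarrow> real^'n).
      0 < \<theta> 1 \<longrightarrow> (\<forall>s t. 1 \<le> s \<longrightarrow> s \<le> t \<longrightarrow> t \<le> T \<longrightarrow> \<theta> s \<le> \<theta> t) \<longrightarrow>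
      wt 1 = a \<longrightarrow>
      (\<forall>t\<in>{2..T}. wt t = vnorm (had (wt (t - 1)) (vexp (- \<theta> (t - 1) *\<^sub>R l (t - 1))))) \<longrightarrow>
      (\<forall>t\<in>{1..T}. w t = vnorm (had (wt t) (vexp (- \<theta> t *\<^sub>R lh t)))) \<longrightarrow>
      (\<forall>t\<in>{1..T}. l t \<in> subdiff (\<phi> t) (w t)) \<longrightarrow>
      ((\<Sum>t\<in>{1..T}. \<phi> t (w t)) - (\<Sum>t\<in>{1..T}. \<phi> t u)
         \<le> ereal (1 / \<theta> 1) * kl u a
           + ereal (\<Sum>t\<in>{1..T}. 1 / \<theta> t * Qstar 2 (\<theta> t * infnorm (l t - lh t)))
           - (\<Sum>t\<in>{1..T}. ereal (1 / \<theta> t) * kl (w t) (wt t))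
       \<and>
       (\<Sum>t\<in>{1..T}. \<phi> t (w t)) - (\<Sum>t\<in>{1..T}. \<phi> t u)
         \<le> ereal (1 / \<theta> 1) * kl u a
           + ereal (\<Sum>t\<in>{1..T}. 1 / \<theta> t * Phi (\<theta> t) (l t) (lh t))
           - (\<Sum>t\<in>{1..T}. ereal (1 / \<theta> t) *
                kl (vnorm (had (wt t) (vexp (- \<theta> t *\<^sub>R hatprime (l t) (lh t))))) (wt t))))"
proof (intro conjI allI impI)
  fix \<eta> :: "nat \<Rightarrow> real" and w wt :: "nat \<Rightarrow> real^'n"
  assume "\<forall>s t. 1 \<le> s \<longrightarrow> s \<le> t \<longrightarrow> t \<le> T + 1 \<longrightarrow> \<eta> t \<le> \<eta> s" "0 < \<eta> (T + 1)"
    "\<forall>t\<in>{1..T}. wt t = vnorm (had a (vexp (- \<eta> t *\<^sub>R (\<Sum>i\<in>{1..<t}. l i))))"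
    "\<forall>t\<in>{1..T}. w t = vnorm (had (wt t) (vexp (- \<eta> t *\<^sub>R lh t)))"
    "\<forall>t\<in>{1..T}. l t \<in> subdiff (\<phi> t) (w t)"
  note M = main1[OF dom a u this]
  show "(\<Sum>t\<in>{1..T}. \<phi> t (w t)) - (\<Sum>t\<in>{1..T}. \<phi> t u)
         \<le> ereal (1 / \<eta> (T + 1)) * kl u a
           + ereal (\<Sum>t\<in>{1..T}. 1 / \<eta> t * Qstar 2 (\<eta> t * infnorm (l t - lh t)))
           - (\<Sum>t\<in>{1..T}. ereal (1 / \<eta> t) * kl (w t) (wt t))" using M by blast
  show "(\<Sum>t\<in>{1..T}. \<phi> t (w t)) - (\<Sum>t\<in>{1..T}. \<phi> t u)
         \<le> ereal (1 / \<eta> (T + 1)) * kl u a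
           + ereal (\<Sum>t\<in>{1..T}. 1 / \<eta> t * Phi (\<eta> t) (l t) (lh t))
           - (\<Sum>t\<in>{1..T}. ereal (1 / \<eta> t) *
                kl (vnorm (had (wt t) (vexp (- \<eta> t *\<^sub>R hatprime (l t) (lh t))))) (wt t))" using M by blast
next
  fix \<theta> :: "nat \<Rightarrow> real" and w wt :: "nat \<Rightarrow> real^'n"
  assume "0 < \<theta> 1" "\<forall>s t. 1 \<le> s \<longrightarrow> s \<le> t \<longrightarrow> t \<le> T \<longrightarrow> \<theta> s \<le> \<theta> t"
      "wt 1 = a"
      "\<forall>t\<in>{2..T}. wt t = vnorm (had (wt (t - 1)) (vexp (- \<theta> (t - 1) *\<^sub>R l (t - 1))))"
      "\<forall>t\<in>{1..T}. w t = vnorm (had (wt t) (vexp (- \<theta> t *\<^sub>R lh t)))"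
      "\<forall>t\<in>{1..T}. l t \<in> subdiff (\<phi> t) (w t)"
  note M = main2[OF dom a u this]
  show "(\<Sum>t\<in>{1..T}. \<phi> t (w t)) - (\<Sum>t\<in>{1..T}. \<phi> t u)
         \<le> ereal (1 / \<theta> 1) * kl u a
           + ereal (\<Sum>t\<in>{1..T}. 1 / \<theta> t * Qstar 2 (\<theta> t * infnorm (l t - lh t)))
           - (\<Sum>t\<in>{1..T}. ereal (1 / \<theta> t) * kl (w t) (wt t))" using M by blast
  show "(\<Sum>t\<in>{1..T}. \<phi> t (w t)) - (\<Sum>t\<in>{1..T}. \<phi> t u)
         \<le> ereal (1 / \<theta> 1) * kl u a
           + ereal (\<Sum>t\<in>{1..T}. 1 / \<theta> t * Phi (\<theta> t) (l t) (lh t))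
           - (\<Sum>t\<in>{1..T}. ereal (1 / \<theta> t) *
                kl (vnorm (had (wt t) (vexp (- \<theta> t *\<^sub>R hatprime (l t) (lh t))))) (wt t))" using M by blast
qed


end
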